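(* There are countably infinitely many pairwise distinct quasi-varieties $\mathbb{V}$ (in the signature $(\wedge,\vee,0,1,\to)$) with $\mathbb{HA}\subseteq\mathbb{V}\subseteq\mathbb{IIL}$, where $\mathbb{HA}$ is the variety of Heyting algebras and $\mathbb{IIL}$ the quasi-variety of integral implicative lattices.
   Context: An integral implicative lattice is a bounded lattice $(L,\le,\wedge,\vee,0,1)$ with a binary operation $\to$ satisfying, for all $a,b,c$: (A1) $(a\vee b)\to c=(a\to c)\wedge(b\to c)$; (A2) $a\to(b\wedge c)=(a\to b)\wedge(a\to c)$; (A3) $a\le b$ iff $1\le a\to b$. $\mathbb{IIL}$ denotes the quasi-variety of integral implicative lattices. A Heyting algebra is a bounded lattice with $\to$ satisfying (A1)–(A3), distributivity, and (H1) $a\wedge(a\to b)\le b$, (H2) $b\le a\to(a\wedge b)$; $\mathbb{HA}$ denotes the variety of Heyting algebras, regarded as a subclass of $\mathbb{IIL}$. *)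

theory Defs
  imports Main
begin

datatype tm = Var nat | Bot | Top | Meet tm tm | Join tm tm | Imp tm tm

type_synonym qeq = "(tm \<times> tm) list \<times> (tm \<times> tm)"

record 'a alg =
  carrier :: "'a set"
  mt :: "'a \<Rightarrow> 'a \<Rightarrow> 'a"
  jn :: "'a \<Rightarrow> 'a \<Rightarrow> 'a"
  im :: "'a \<Rightarrow> 'a \<Rightarrow> 'a"
  zero :: 'a
  one :: 'a

definition is_alg :: "'a alg \<Rightarrow> bool" where
  "is_alg A \<longleftrightarrow> zero A \<in> carrier A \<and> one A \<in> carrier A \<and>
     (\<forall>x\<in>carrier A. \<forall>y\<in>carrier A.
        mt A x y \<in> carrier A \<and> jn A x y \<in> carrier A \<and> im A x y \<in> carrier A)"

fun eval :: "'a alg \<Rightarrow> (nat \<Rightarrow> 'a) \<Rightarrow> tm \<Rightarrow> 'a" where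
  "eval A v (Var i) = v i"
| "eval A v Bot = zero A"
| "eval A v Top = one A"
| "eval A v (Meet s t) = mt A (eval A v s) (eval A v t)"
| "eval A v (Join s t) = jn A (eval A v s) (eval A v t)"
| "eval A v (Imp s t) = im A (eval A v s) (eval A v t)"

definition holds :: "'a alg \<Rightarrow> qeq \<Rightarrow> bool" where
  "holds A q \<longleftrightarrow> (\<forall>v. (\<forall>i. v i \<in> carrier A) \<longrightarrow>
      (\<forall>(s,t)\<in>set (fst q). eval A v s = eval A v t) \<longrightarrow>
      eval A v (fst (snd q)) = eval A v (snd (snd q)))"

definition Mod :: "qeq set \<Rightarrow> nat alg set" where
  "Mod \<Sigma> = {A. is_alg A \<and> (\<forall>q\<in>\<Sigma>. holds A q)}"

definition quasivariety :: "nat alg set \<Rightarrow> bool" where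
  "quasivariety K \<longleftrightarrow> (\<exists>\<Sigma>. K = Mod \<Sigma>)"

definition le :: "'a alg \<Rightarrow> 'a \<Rightarrow> 'a \<Rightarrow> bool" where
  "le A x y \<longleftrightarrow> mt A x y = x"

definition bounded_lattice :: "'a alg \<Rightarrow> bool" where
  "bounded_lattice A \<longleftrightarrow> is_alg A \<and>
    (\<forall>x\<in>carrier A. \<forall>y\<in>carrier A. \<forall>z\<in>carrier A.
       mt A x (mt A y z) = mt A (mt A x y) z \<and> jn A x (jn A y z) = jn A (jn A x y) z \<and>
       mt A x y = mt A y x \<and> jn A x y = jn A y x \<and>
       mt A x x = x \<and> jn A x x = x \<and>
       mt A x (jn A x y) = x \<and> jn A x (mt A x y) = x \<and>
       mt A (zero A) x = zero A \<and> jn A (one A) x = one A)"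

definition IIL :: "'a alg \<Rightarrow> bool" where
  "IIL A \<longleftrightarrow> bounded_lattice A \<and>
    (\<forall>a\<in>carrier A. \<forall>b\<in>carrier A. \<forall>c\<in>carrier A.
       im A (jn A a b) c = mt A (im A a c) (im A b c) \<and>
       im A a (mt A b c) = mt A (im A a b) (im A a c) \<and>
       (le A a b \<longleftrightarrow> le A (one A) (im A a b)))"

definition HA :: "'a alg \<Rightarrow> bool" where
  "HA A \<longleftrightarrow> IIL A \<and>
    (\<forall>a\<in>carrier A. \<forall>b\<in>carrier A. \<forall>c\<in>carrier A.
       mt A a (jn A b c) = jn A (mt A a b) (mt A a c) \<and>
       le A (mt A a (im A a b)) b \<and>
       le A b (im A a (mt A a b)))"

end

theory Submission
  imports Defs
begin

definition ax :: "qeq list" where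
  "ax = [
    ([], (Meet (Var 0) (Meet (Var 1) (Var 2)), Meet (Meet (Var 0) (Var 1)) (Var 2))),
    ([], (Join (Var 0) (Join (Var 1) (Var 2)), Join (Join (Var 0) (Var 1)) (Var 2))),
    ([], (Meet (Var 0) (Var 1), Meet (Var 1) (Var 0))),
    ([], (Join (Var 0) (Var 1), Join (Var 1) (Var 0))),
    ([], (Meet (Var 0) (Var 0), Var 0)),
    ([], (Join (Var 0) (Var 0), Var 0)),
    ([], (Meet (Var 0) (Join (Var 0) (Var 1)), Var 0)),
    ([], (Join (Var 0) (Meet (Var 0) (Var 1)), Var 0)),
    ([], (Meet Bot (Var 0), Bot)),
    ([], (Join Top (Var 0), Top)),
    ([], (Imp (Join (Var 0) (Var 1)) (Var 2), Meet (Imp (Var 0) (Var 2)) (Imp (Var 1) (Var 2)))),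
    ([], (Imp (Var 0) (Meet (Var 1) (Var 2)), Meet (Imp (Var 0) (Var 1)) (Imp (Var 0) (Var 2)))),
    ([(Meet (Var 0) (Var 1), Var 0)], (Meet Top (Imp (Var 0) (Var 1)), Top)),
    ([(Meet Top (Imp (Var 0) (Var 1)), Top)], (Meet (Var 0) (Var 1), Var 0))]"

lemma IIL_imp_ax:
  assumes "IIL A" shows "is_alg A \<and> (\<forall>q\<in>set ax. holds A q)"
  using assms unfolding IIL_def bounded_lattice_def le_def
  by (simp add: ax_def holds_def) (intro conjI allI impI; metis)

lemma ax_imp_IIL:
  assumes "is_alg A" "\<forall>q\<in>set ax. holds A q" shows "IIL A"
proof -
  have key: "\<forall>q\<in>set ax. (\<forall>(s,t)\<in>set (fst q). eval A w s = eval A w t) \<longrightarrow>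
         eval A w (fst (snd q)) = eval A w (snd (snd q))" if w: "\<forall>i. w i \<in> carrier A" for w
  proof (intro ballI)
    fix q assume "q \<in> set ax"
    then have "holds A q" using assms(2) by blast
    then show "(\<forall>(s,t)\<in>set (fst q). eval A w s = eval A w t) \<longrightarrow>
         eval A w (fst (snd q)) = eval A w (snd (snd q))"
      unfolding holds_def using w by blast
  qed
  have all: "(mt A a (mt A b c) = mt A (mt A a b) c \<and> jn A a (jn A b c) = jn A (jn A a b) c \<and>
       mt A a b = mt A b a \<and> jn A a b = jn A b a \<and> mt A a a = a \<and> jn A a a = a \<and>
       mt A a (jn A a b) = a \<and> jn A a (mt A a b) = a \<and> mt A (zero A) a = zero A \<and> jn A (one A) a = one A)
      \<and> (im A (jn A a b) c = mt A (im A a c) (im A b c) \<and>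
       im A a (mt A b c) = mt A (im A a b) (im A a c) \<and>
       (mt A a b = a) = (mt A (one A) (im A a b) = one A))"
    if abc: "a \<in> carrier A" "b \<in> carrier A" "c \<in> carrier A" for a b c
  proof -
    define w where "w = (\<lambda>i::nat. if i = 0 then a else if i = 1 then b else c)"
    have w: "\<forall>i. w i \<in> carrier A" using abc by (simp add: w_def)
    have w0: "w 0 = a" and w1: "w 1 = b" "w (Suc 0) = b" and w2: "w 2 = c" by (simp_all add: w_def)
    note K = key[OF w, unfolded ax_def, simplified, unfolded w0 w1 w2]
    from K show ?thesis by blast
  qed
  show ?thesis
    unfolding IIL_def bounded_lattice_def le_def
    using assms(1) all by blast
qed

lemma IIL_iff: "IIL A \<longleftrightarrow> is_alg A \<and> (\<forall>q\<in>set ax. holds A q)"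
  using IIL_imp_ax ax_imp_IIL by blast

fun Jn :: "nat \<Rightarrow> tm" where
  "Jn 0 = Imp (Var 1) (Var 0)"
| "Jn (Suc n) = Join (Jn n) (Imp (Var (Suc (Suc n))) (Var (Suc n)))"

definition qn :: "nat \<Rightarrow> qeq" where
  "qn n = ([], (Meet (Var 0) (Jn n), Var 0))"

lemma eval_in:
  assumes "is_alg A" "\<forall>i. v i \<in> carrier A" shows "eval A v t \<in> carrier A"
  using assms by (induction t) (auto simp: is_alg_def)

lemma HA_qn:
  fixes A :: "'a alg"
  assumes "HA A" shows "holds A (qn n)"
proof -
  have I: "IIL A" using assms by (simp add: HA_def)
  hence B: "bounded_lattice A" by (simp add: IIL_def)
  hence alg: "is_alg A" by (simp add: bounded_lattice_def)
  have assoc: "\<And>a b c. a \<in> carrier A \<Longrightarrow> b \<in> carrier A \<Longrightarrow> c \<in> carrier A \<Longrightarrow>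
      mt A a (mt A b c) = mt A (mt A a b) c" using B by (simp add: bounded_lattice_def)
  have idem: "\<And>a. a \<in> carrier A \<Longrightarrow> mt A a a = a" using B by (simp add: bounded_lattice_def)
  have absorb: "\<And>a b. a \<in> carrier A \<Longrightarrow> b \<in> carrier A \<Longrightarrow> mt A a (jn A a b) = a"
    using B by (simp add: bounded_lattice_def)
  have cl: "\<And>a b. a \<in> carrier A \<Longrightarrow> b \<in> carrier A \<Longrightarrow>
      mt A a b \<in> carrier A \<and> jn A a b \<in> carrier A \<and> im A a b \<in> carrier A"
    using alg by (simp add: is_alg_def)
  have trans: "\<And>a b c. a \<in> carrier A \<Longrightarrow> b \<in> carrier A \<Longrightarrow> c \<in> carrier A \<Longrightarrow>
      mt A a b = a \<Longrightarrow> mt A b c = b \<Longrightarrow> mt A a c = a"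
    by (metis assoc)
  have A2: "\<And>a b c. a \<in> carrier A \<Longrightarrow> b \<in> carrier A \<Longrightarrow> c \<in> carrier A \<Longrightarrow>
      im A a (mt A b c) = mt A (im A a b) (im A a c)" using I by (simp add: IIL_def)
  have H2: "\<And>a b. a \<in> carrier A \<Longrightarrow> b \<in> carrier A \<Longrightarrow> mt A b (im A a (mt A a b)) = b"
    using assms by (simp add: HA_def le_def)
  have bimp: "\<And>a b. a \<in> carrier A \<Longrightarrow> b \<in> carrier A \<Longrightarrow> mt A b (im A a b) = b"
  proof -
    fix a b assume ab: "a \<in> carrier A" "b \<in> carrier A"
    define p where "p = im A a a"
    define q where "q = im A a b"
    have pq: "p \<in> carrier A" "q \<in> carrier A" using cl ab by (auto simp: p_def q_def)
    have e: "mt A b (mt A p q) = b" using H2[OF ab] A2[OF ab(1) ab(1) ab(2)] by (simp add: p_def q_def)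
    have "mt A b q = mt A (mt A b (mt A p q)) q" using e by simp
    also have "\<dots> = mt A b (mt A (mt A p q) q)" using assoc cl pq ab by metis
    also have "\<dots> = mt A b (mt A p (mt A q q))" using assoc cl pq ab by metis
    also have "\<dots> = b" using idem pq e by simp
    finally show "mt A b (im A a b) = b" by (simp add: q_def)
  qed
  show ?thesis unfolding holds_def qn_def
  proof (intro allI impI)
    fix v :: "nat \<Rightarrow> 'a" assume v: "\<forall>i. v i \<in> carrier A"
    have "mt A (v 0) (eval A v (Jn n)) = v 0"
    proof (induction n)
      case 0 then show ?case using bimp v by simp
    next
      case (Suc n)
      have "mt A (eval A v (Jn n)) (jn A (eval A v (Jn n)) (im A (v (Suc (Suc n))) (v (Suc n))))
            = eval A v (Jn n)"
        using absorb eval_in[OF alg v] cl v by blast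
      then show ?case using trans[OF v[rule_format] eval_in[OF alg v] eval_in[OF alg v, of "Jn (Suc n)"]] Suc
        by simp
    qed
    then show "eval A v (fst (snd ([], Meet (Var 0) (Jn n), Var 0))) =
               eval A v (snd (snd ([], Meet (Var 0) (Jn n), Var 0)))" by simp
  qed
qed

definition C :: "nat \<Rightarrow> nat alg" where
  "C k = \<lparr>carrier = {0..k}, mt = min, jn = max, im = (\<lambda>a b. if a \<le> b then k else 0),
          zero = 0, one = k\<rparr>"

lemma C_IIL: "IIL (C k)"
  unfolding IIL_def bounded_lattice_def is_alg_def le_def C_def
  by auto

lemma C_Jn: "eval (C k) v (Jn n) = (if \<exists>i\<le>n. v (Suc i) \<le> v i then k else 0)"
  by (induction n) (auto simp: C_def le_Suc_eq)

lemma incr: "\<forall>i\<le>n. v i < v (Suc i) \<Longrightarrow> j \<le> Suc n \<Longrightarrow> v 0 + j \<le> (v j :: nat)"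
proof (induction j)
  case 0 then show ?case by simp
next
  case (Suc j)
  have jn: "j \<le> n" using Suc.prems by simp
  have a: "v j < v (Suc j)" using Suc.prems(1) jn by blast
  have b: "v 0 + j \<le> v j" using Suc.IH Suc.prems by simp
  show ?case using a b by simp
qed

lemma C_qn: "k \<le> Suc n \<Longrightarrow> holds (C k) (qn n)"
  unfolding holds_def qn_def
proof (intro allI impI)
  fix v :: "nat \<Rightarrow> nat" assume k: "k \<le> Suc n" and v: "\<forall>i. v i \<in> carrier (C k)"
  have vk: "\<And>i. v i \<le> k" using v by (simp add: C_def)
  show "eval (C k) v (fst (snd ([], Meet (Var 0) (Jn n), Var 0))) =
        eval (C k) v (snd (snd ([], Meet (Var 0) (Jn n), Var 0)))"
  proof (cases "\<exists>i\<le>n. v (Suc i) \<le> v i")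
    case True then show ?thesis using vk by (simp add: C_Jn) (simp add: C_def)
  next
    case False
    then have "\<forall>i\<le>n. v i < v (Suc i)" by auto
    from incr[OF this, of "Suc n"] vk[of "Suc n"] k have "v 0 = 0" by simp
    then show ?thesis by (simp add: C_def)
  qed
qed

lemma C_not_qn: "Suc (Suc n) \<le> k \<Longrightarrow> \<not> holds (C k) (qn n)"
  unfolding holds_def qn_def
proof
  assume k: "Suc (Suc n) \<le> k" and
    H: "\<forall>v. (\<forall>i. v i \<in> carrier (C k)) \<longrightarrow>
          (\<forall>(s, t)\<in>set (fst ([], Meet (Var 0) (Jn n), Var 0)). eval (C k) v s = eval (C k) v t) \<longrightarrow>
          eval (C k) v (fst (snd ([], Meet (Var 0) (Jn n), Var 0))) =
          eval (C k) v (snd (snd ([], Meet (Var 0) (Jn n), Var 0)))"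
  define v :: "nat \<Rightarrow> nat" where "v = (\<lambda>i. min (Suc i) k)"
  have "\<forall>i. v i \<in> carrier (C k)" by (simp add: v_def C_def)
  with H have e: "min (v 0) (eval (C k) v (Jn n)) = v 0" by (simp add: C_def)
  have "\<not> (\<exists>i\<le>n. v (Suc i) \<le> v i)" using k by (auto simp: v_def)
  then have "eval (C k) v (Jn n) = 0" by (simp only: C_Jn if_False)
  with e k show False by (simp add: v_def)
qed

theorem lemma2p3:
  shows "\<exists>V :: nat \<Rightarrow> nat alg set. inj V \<and>
           (\<forall>n. quasivariety (V n) \<and>
                {A. HA A} \<subseteq> V n \<and> V n \<subseteq> {A. IIL A})"
proof (intro exI conjI allI)
  define V where "V = (\<lambda>n. Mod (set ax \<union> {qn n}))"
  have mem: "\<And>A n. A \<in> V n \<longleftrightarrow> IIL A \<and> holds A (qn n)"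
    unfolding V_def Mod_def using IIL_iff by auto
  show "inj V"
  proof (rule injI)
    fix n m assume e: "V n = V m"
    show "n = m"
    proof (rule ccontr)
      assume "n \<noteq> m"
      then consider "n < m" | "m < n" by linarith
      then show False
      proof cases
        case 1
        have "C (Suc m) \<in> V m" using mem C_IIL C_qn by auto
        moreover have "C (Suc m) \<notin> V n" using mem C_not_qn 1 by auto
        ultimately show False using e by simp
      next
        case 2
        have "C (Suc n) \<in> V n" using mem C_IIL C_qn by auto
        moreover have "C (Suc n) \<notin> V m" using mem C_not_qn 2 by auto
        ultimately show False using e by simp
      qed
    qed
  qed
  fix n
  show "quasivariety (V n)" unfolding quasivariety_def V_def by blast
  show "{A. HA A} \<subseteq> V n" using mem HA_qn by (auto simp: HA_def)
  show "V n \<subseteq> {A. IIL A}" using mem by auto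
qed

end
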